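(* Consider any instance of the budgeted matching-market pricing problem (defined in the context) in which every buyer $i$ satisfies $b_i\ge v_i$, and let $\langle\mathbf{X},\mathbf{p}\rangle$ be the outcome obtained by Algorithm 1 (described in the context). If $X_i\neq\emptyset$, then buyer $i$ obtains all the items of $X_i$ at a unique price per item, $\bar p_i=p_i/|X_i|$.
   Context: Instance: a finite set $I$ of $n$ buyers and a finite set $J$ of $m$ distinct items. Each buyer $i$ has a preference set $S_i\subseteq J$, a value $v_i>0$ for each item of $S_i$ (value $0$ for items outside $S_i$), and a budget $b_i\ge 0$. An outcome $\langle\mathbf{X},\mathbf{p}\rangle$ consists of pairwise disjoint bundles $X_i\subseteq J$ and payments $p_i\ge 0$. Algorithm 1 (ascending price auction). Throughout, $b_i$ denotes buyer $i$'s remaining budget (initially her budget, decreased by each payment), $J$ denotes the set of currently unsold items, and $\epsilon>0$ is an arbitrarily small price increment. For a price $p>0$, the demand of buyer $i$ is $D_i(p)=\min\{\lfloor b_i/p\rfloor,|S_i|\}$ if $p\le v_i$ and $D_i(p)=0$ if $p>v_i$. Let $A^p=\{i: v_i>p, D_i(p)>0\}$, $Q^p=\{i: v_i=p, D_i(p)>0\}$, $I^p=A^p\cup Q^p$. $G^p$ is the bipartite graph on $I^p\cup J$ with an edge $(i,j)$ iff $j\in S_i$, and $\bar G^p$ is its subgraph on $A^p\cup J$. A $B$-matching of $G^p$ (or $\bar G^p$) is a set of its edges in which every buyer $i$ lies in at most $D_i(p)$ edges and every item in at most one edge; $\mathcal{M}(G^p)$ denotes a maximum one. Given a $B$-matching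 $\mathcal{M}$, an augmenting path from buyer $i$ to item $j$ is a sequence $i=y_1,z_1,y_2,z_2,\dots,y_h,z_h=j$ of buyers $y_k$ and items $z_k$ with $z_k\in S_{y_k}$, $(y_k,z_k)\notin\mathcal{M}$ for all $k$, and $(z_k,y_{k+1})\in\mathcal{M}$ for $k<h$. "Giving item $j$ to buyer $i$ at price $q$" means: remove $j$ from $J$, add $j$ to $X_i$, increase $p_i$ by $q$ and decrease $b_i$ by $q$. Start with $p=0$, $X_i=\emptyset$, $p_i=0$. While a maximum $B$-matching of $G^p$ is nonempty: increase $p$ until $|\mathcal{M}(G^p)|>|\mathcal{M}(G^{p+\epsilon})|$ (a critical price). If $|\mathcal{M}(G^p)|>|\mathcal{M}(\bar G^p)|$, run Procedure I: let $J_Q=\bigcup_{i\in Q^p}S_i$; compute a maximum $B$-matching $\mathcal{M}$ of $\bar G^p$ that matches the minimum number of items of $J_Q$; let $\bar J$ be the items of $J$ unmatched in $\mathcal{M}$ and $N(\bar J)$ the buyers having an augmenting path w.r.t. $\mathcal{M}$ to some item of $\bar J$; give each item $j$ with $(i,j)\in\mathcal{M}$, $i\in N(\bar J)$, to $i$ at price $p$; and assign the items of $\bar J$ to buyers in $Q^p$ (respecting supply and budget constraints), each at price $p$. Otherwise run Procedure II: compute a maximum $B$-matching $\mathcal{M}$ of $G^{p+\epsilon}$; let $\bar J$ be the items unmatched in it and $N(\bar J)$ the buyers having an augmenting path to an item of $\bar J$; give each item $j$ with $(i,j)\in\mathcal{M}$, $i\in N(\bar J)$, to $i$ at price $p+\epsilon$;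 remove $\bar J$ from $J$; and remove all items no longer demanded by any buyer. *)

theory Defs
  imports Complex_Main
begin

text \<open>Buyers have type 'b, items have type 'j. An instance is given by a finite
buyer set I, a finite item set J0, preference sets S, values v and budgets b.\<close>

text \<open>State of Algorithm 1: currently unsold items, bundles X_i, payments p_i,
the price at which each sold item was sold, and the current auction price p.
The remaining budget of buyer i is b i - paid s i.\<close>

record ('b, 'j) auction_state =
  unsold :: "'j set"
  xbundle :: "'b \<Rightarrow> 'j set"
  paid   :: "'b \<Rightarrow> real"
  iprice :: "'j \<Rightarrow> real"
  cur    :: real

definition demand :: "('b \<Rightarrow> 'j set) \<Rightarrow> ('b \<Rightarrow> real) \<Rightarrow> ('b \<Rightarrow> real) \<Rightarrow> real \<Rightarrow> 'b \<Rightarrow> nat" where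
  "demand S v bud p i =
     (if 0 < p \<and> p \<le> v i then min (nat \<lfloor>bud i / p\<rfloor>) (card (S i)) else 0)"

definition rbud :: "('b \<Rightarrow> real) \<Rightarrow> ('b, 'j, 'z) auction_state_scheme \<Rightarrow> 'b \<Rightarrow> real" where
  "rbud b s i = b i - paid s i"

definition dem :: "('b \<Rightarrow> 'j set) \<Rightarrow> ('b \<Rightarrow> real) \<Rightarrow> ('b \<Rightarrow> real) \<Rightarrow> ('b, 'j, 'z) auction_state_scheme
     \<Rightarrow> real \<Rightarrow> 'b \<Rightarrow> nat" where
  "dem S v b s p = demand S v (rbud b s) p"

definition Abuy where
  "Abuy I S v b s p = {i \<in> I. p < v i \<and> 0 < dem S v b s p i}"
definition Qbuy where
  "Qbuy I S v b s p = {i \<in> I. v i = p \<and> 0 < dem S v b s p i}"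
definition Ibuy where
  "Ibuy I S v b s p = Abuy I S v b s p \<union> Qbuy I S v b s p"

definition bmatch :: "('b \<Rightarrow> 'j set) \<Rightarrow> 'b set \<Rightarrow> 'j set \<Rightarrow> ('b \<Rightarrow> nat) \<Rightarrow> ('b \<times> 'j) set \<Rightarrow> bool" where
  "bmatch S Bs Js d M \<longleftrightarrow>
     M \<subseteq> Bs \<times> Js \<and> (\<forall>(i, j) \<in> M. j \<in> S i) \<and>
     (\<forall>i. card {j. (i, j) \<in> M} \<le> d i) \<and>
     (\<forall>i i' j. (i, j) \<in> M \<longrightarrow> (i', j) \<in> M \<longrightarrow> i = i')"

definition msize :: "('b \<Rightarrow> 'j set) \<Rightarrow> 'b set \<Rightarrow> 'j set \<Rightarrow> ('b \<Rightarrow> nat) \<Rightarrow> nat" where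
  "msize S Bs Js d = Max (card ` {M. bmatch S Bs Js d M})"

definition max_bmatch :: "('b \<Rightarrow> 'j set) \<Rightarrow> 'b set \<Rightarrow> 'j set \<Rightarrow> ('b \<Rightarrow> nat) \<Rightarrow> ('b \<times> 'j) set \<Rightarrow> bool" where
  "max_bmatch S Bs Js d M \<longleftrightarrow> bmatch S Bs Js d M \<and> card M = msize S Bs Js d"

text \<open>Augmenting path i = y_1, z_1, ..., y_h, z_h = j w.r.t. M in the graph on Bs \<union> Js
  (indices shifted to start at 0).\<close>
definition aug_path :: "('b \<Rightarrow> 'j set) \<Rightarrow> 'b set \<Rightarrow> 'j set \<Rightarrow> ('b \<times> 'j) set \<Rightarrow> 'b \<Rightarrow> 'j \<Rightarrow> bool" where
  "aug_path S Bs Js M i j \<longleftrightarrow>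
     (\<exists>h::nat. \<exists>ys :: nat \<Rightarrow> 'b. \<exists>zs :: nat \<Rightarrow> 'j. 1 \<le> h \<and> ys 0 = i \<and> zs (h - 1) = j \<and>
        (\<forall>k<h. ys k \<in> Bs \<and> zs k \<in> Js \<and> zs k \<in> S (ys k) \<and> (ys k, zs k) \<notin> M) \<and>
        (\<forall>k. k + 1 < h \<longrightarrow> (ys (k + 1), zs k) \<in> M))"

definition give :: "('b, 'j, 'z) auction_state_scheme \<Rightarrow> ('b \<times> 'j) set \<Rightarrow> real
     \<Rightarrow> ('b, 'j, 'z) auction_state_scheme" where
  "give s M q = s\<lparr> unsold := unsold s - snd ` M,
                   xbundle := (\<lambda>i. xbundle s i \<union> {j. (i, j) \<in> M}),
                   paid := (\<lambda>i. paid s i + q * real (card {j. (i, j) \<in> M})),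
                   iprice := (\<lambda>j. if j \<in> snd ` M then q else iprice s j) \<rparr>"

definition gsize where
  "gsize I S v b s x = msize S (Ibuy I S v b s x) (unsold s) (dem S v b s x)"

definition critical where
  "critical I S v b s p \<longleftrightarrow> cur s \<le> p \<and> 0 < p \<and>
     (\<forall>q>p. gsize I S v b s q < gsize I S v b s p)"

definition is_critical_least where
  "is_critical_least I S v b s p \<longleftrightarrow> critical I S v b s p \<and>
     (\<forall>p'. critical I S v b s p' \<longrightarrow> p \<le> p')"

inductive alg_step :: "'b set \<Rightarrow> ('b \<Rightarrow> 'j set) \<Rightarrow> ('b \<Rightarrow> real) \<Rightarrow> ('b \<Rightarrow> real) \<Rightarrow> real
    \<Rightarrow> ('b, 'j) auction_state \<Rightarrow> ('b, 'j) auction_state \<Rightarrow> bool"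
  for I S v b and eps :: real where
  procI: "\<lbrakk> is_critical_least I S v b s p;
            gsize I S v b s p > msize S (Abuy I S v b s p) (unsold s) (dem S v b s p);
            JQ = \<Union> (S ` Qbuy I S v b s p);
            max_bmatch S (Abuy I S v b s p) (unsold s) (dem S v b s p) M;
            \<forall>M'. max_bmatch S (Abuy I S v b s p) (unsold s) (dem S v b s p) M' \<longrightarrow>
                  card (snd ` M \<inter> JQ) \<le> card (snd ` M' \<inter> JQ);
            Jbar = unsold s - snd ` M;
            M1 = {(i, j) \<in> M. \<exists>j' \<in> Jbar. aug_path S (Abuy I S v b s p) (unsold s) M i j'};
            max_bmatch S (Qbuy I S v b s p) Jbar (dem S v b s p) M2;
            s' = give (s\<lparr>cur := p\<rparr>) (M1 \<union> M2) p \<rbrakk>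
          \<Longrightarrow> alg_step I S v b eps s s'"
| procII: "\<lbrakk> is_critical_least I S v b s p;
            \<not> gsize I S v b s p > msize S (Abuy I S v b s p) (unsold s) (dem S v b s p);
            q = p + eps;
            max_bmatch S (Ibuy I S v b s q) (unsold s) (dem S v b s q) M;
            Jbar = unsold s - snd ` M;
            M1 = {(i, j) \<in> M. \<exists>j' \<in> Jbar. aug_path S (Ibuy I S v b s q) (unsold s) M i j'};
            s1 = give (s\<lparr>cur := p\<rparr>) M1 q;
            s' = s1\<lparr>unsold := {j \<in> unsold s1 - Jbar. \<exists>i \<in> I. j \<in> S i \<and> 0 < dem S v b s1 q i}\<rparr> \<rbrakk>
          \<Longrightarrow> alg_step I S v b eps s s'"

definition init_state :: "'j set \<Rightarrow> ('b, 'j) auction_state" where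
  "init_state J0 = \<lparr>unsold = J0, xbundle = (\<lambda>_. {}), paid = (\<lambda>_. 0), iprice = (\<lambda>_. 0), cur = 0\<rparr>"

text \<open>The loop stops when no critical price is reached any more
  (i.e. the maximum B-matching at the current price level is empty).\<close>
definition final_state where
  "final_state I S v b s \<longleftrightarrow> \<not> (\<exists>p. critical I S v b s p)"

definition alg_outcome where
  "alg_outcome I J0 S v b eps s \<longleftrightarrow>
     (alg_step I S v b eps)\<^sup>*\<^sup>* (init_state J0) s \<and> final_state I S v b s"

end

theory Submission
  imports Defs
begin


definition pth where "pth S Bs Js M i j h ys zs \<longleftrightarrow> 1 \<le> (h::nat) \<and> ys 0 = i \<and> zs (h-1) = j \<and>
  (\<forall>k<h. ys k \<in> Bs \<and> zs k \<in> Js \<and> zs k \<in> S (ys k) \<and> (ys k, zs k) \<notin> M) \<and>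
  (\<forall>k. k+1 < h \<longrightarrow> (ys (k+1), zs k) \<in> M)"

lemma aug_path_pth: "aug_path S Bs Js M i j \<longleftrightarrow> (\<exists>h ys zs. pth S Bs Js M i j h ys zs)"
  unfolding aug_path_def pth_def by auto

lemma shortcut:
  assumes P: "pth S Bs Js M i j h ys zs" and ab: "a < b" "b < h" and s: "zs b \<in> S (ys a)" "(ys a, zs b) \<notin> M"
  shows "pth S Bs Js M i j (h - (b - a)) (\<lambda>k. if k \<le> a then ys k else ys (k + (b-a))) (\<lambda>k. if k < a then zs k else zs (k + (b-a)))"
proof -
  define ys' where "ys' = (\<lambda>k. if k \<le> a then ys k else ys (k + (b-a)))"
  define zs' where "zs' = (\<lambda>k. if k < a then zs k else zs (k + (b-a)))"
  define h' where "h' = h - (b - a)"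
  have p1: "1 \<le> h" "ys 0 = i" "zs (h-1) = j" and p2: "\<And>k. k<h \<Longrightarrow> ys k \<in> Bs \<and> zs k \<in> Js \<and> zs k \<in> S (ys k) \<and> (ys k, zs k) \<notin> M"
    and p3: "\<And>k. k+1 < h \<Longrightarrow> (ys (k+1), zs k) \<in> M" using P unfolding pth_def by auto
  have q1: "1 \<le> h'" using ab by (auto simp: h'_def)
  have q2: "ys' 0 = i" using p1 by (auto simp: ys'_def)
  have e: "h - (b - a) - 1 + (b - a) = h - 1" using ab by auto
  have q3: "zs' (h'-1) = j" using ab p1 e by (auto simp: zs'_def h'_def)
  have q4: "ys' k \<in> Bs \<and> zs' k \<in> Js \<and> zs' k \<in> S (ys' k) \<and> (ys' k, zs' k) \<notin> M" if k: "k < h'" for k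
  proof (cases "k < a")
    case True then show ?thesis using p2[of k] ab by (auto simp: ys'_def zs'_def)
  next
    case False
    show ?thesis
    proof (cases "k = a")
      case True
      then show ?thesis using p2[of a] p2[of b] ab s by (auto simp: ys'_def zs'_def)
    next
      case False
      then show ?thesis using \<open>\<not> k < a\<close> p2[of "k + (b-a)"] k ab by (auto simp: ys'_def zs'_def h'_def)
    qed
  qed
  have q5: "(ys' (k+1), zs' k) \<in> M" if k: "k + 1 < h'" for k
  proof (cases "k + 1 \<le> a")
    case True then show ?thesis using p3[of k] ab by (auto simp: ys'_def zs'_def)
  next
    case False
    then have "k + 1 + (b - a) = (k + (b-a)) + 1" "k + (b-a) + 1 < h" using k ab by (auto simp: h'_def)
    then show ?thesis using False p3[of "k + (b-a)"] by (auto simp: ys'_def zs'_def)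
  qed
  have "pth S Bs Js M i j h' ys' zs'" unfolding pth_def using q1 q2 q3 q4 q5 by blast
  then show ?thesis by (simp add: ys'_def zs'_def h'_def)
qed

lemma min_pth:
  assumes "pth S Bs Js M i j h0 ys0 zs0"
  shows "\<exists>h ys zs. pth S Bs Js M i j h ys zs \<and> inj_on ys {..<h} \<and> inj_on zs {..<h}"
proof -
  have "\<exists>h. \<exists>ys zs. pth S Bs Js M i j h ys zs" using assms by blast
  then obtain h where h: "\<exists>ys zs. pth S Bs Js M i j h ys zs" and hmin: "\<And>h'. h' < h \<Longrightarrow> \<not> (\<exists>ys zs. pth S Bs Js M i j h' ys zs)"
    using exists_least_iff[of "\<lambda>h. \<exists>ys zs. pth S Bs Js M i j h ys zs"] by blast
  then obtain ys zs where P: "pth S Bs Js M i j h ys zs" by blast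
  have p2: "\<And>k. k<h \<Longrightarrow> ys k \<in> Bs \<and> zs k \<in> Js \<and> zs k \<in> S (ys k) \<and> (ys k, zs k) \<notin> M"
    using P unfolding pth_def by auto
  have nb: False if "a < b" "b < h" "ys a = ys b \<or> zs a = zs b" for a b
  proof -
    have "zs b \<in> S (ys a) \<and> (ys a, zs b) \<notin> M" using that p2[of a] p2[of b] by auto
    then have "pth S Bs Js M i j (h - (b - a)) (\<lambda>k. if k \<le> a then ys k else ys (k + (b-a))) (\<lambda>k. if k < a then zs k else zs (k + (b-a)))"
      using shortcut[OF P that(1,2)] by blast
    moreover have "h - (b - a) < h" using that by auto
    ultimately show False using hmin by blast
  qed
  have "inj_on ys {..<h}"
  proof (rule inj_onI)
    fix x y assume "x \<in> {..<h}" "y \<in> {..<h}" "ys x = ys y"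
    then show "x = y" using nb[of x y] nb[of y x] by (cases x y rule: linorder_cases) auto
  qed
  moreover have "inj_on zs {..<h}"
  proof (rule inj_onI)
    fix x y assume "x \<in> {..<h}" "y \<in> {..<h}" "zs x = zs y"
    then show "x = y" using nb[of x y] nb[of y x] by (cases x y rule: linorder_cases) auto
  qed
  ultimately show ?thesis using P by blast
qed

lemma bmatch_finite_card:
  assumes "finite Bs" "finite Js" "bmatch S Bs Js d M"
  shows "card M \<le> msize S Bs Js d"
proof -
  have "{M. bmatch S Bs Js d M} \<subseteq> Pow (Bs \<times> Js)" unfolding bmatch_def by auto
  then have "finite {M. bmatch S Bs Js d M}" using assms(1,2) by (meson finite_Pow_iff finite_SigmaI rev_finite_subset)
  then show ?thesis unfolding msize_def using assms(3) by auto
qed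

lemma aug_sat:
  assumes mx: "max_bmatch S Bs Js d M" and fin: "finite Bs" "finite Js"
    and ap: "aug_path S Bs Js M i j" and j: "j \<in> Js" "j \<notin> snd ` M"
  shows "card {j. (i, j) \<in> M} = d i"
proof (rule ccontr)
  assume ne: "card {j. (i, j) \<in> M} \<noteq> d i"
  have bm: "bmatch S Bs Js d M" and cM: "card M = msize S Bs Js d" using mx unfolding max_bmatch_def by auto
  have Msub: "M \<subseteq> Bs \<times> Js" and MS: "\<And>x y. (x,y) \<in> M \<Longrightarrow> y \<in> S x"
    and Mcap: "\<And>x. card {y. (x, y) \<in> M} \<le> d x" and Mu: "\<And>x x' y. (x,y) \<in> M \<Longrightarrow> (x',y) \<in> M \<Longrightarrow> x = x'"
    using bm unfolding bmatch_def by auto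
  have finM: "finite M" using Msub fin by (meson finite_SigmaI rev_finite_subset)
  have lt: "card {y. (i, y) \<in> M} < d i" using ne Mcap[of i] by auto
  obtain h ys zs where P: "pth S Bs Js M i j h ys zs" and iy: "inj_on ys {..<h}" and iz: "inj_on zs {..<h}"
  proof -
    obtain h0 ys0 zs0 where "pth S Bs Js M i j h0 ys0 zs0" using ap aug_path_pth by metis
    from min_pth[OF this] show ?thesis using that by blast
  qed
  have p1: "1 \<le> h" "ys 0 = i" "zs (h-1) = j" and p2: "\<And>k. k<h \<Longrightarrow> ys k \<in> Bs \<and> zs k \<in> Js \<and> zs k \<in> S (ys k) \<and> (ys k, zs k) \<notin> M"
    and p3: "\<And>k. k+1 < h \<Longrightarrow> (ys (k+1), zs k) \<in> M" using P unfolding pth_def by auto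
  define R where "R = (\<lambda>k. (ys (Suc k), zs k)) ` {..<h-1}"
  define A where "A = (\<lambda>k. (ys k, zs k)) ` {..<h}"
  define M' where "M' = (M - R) \<union> A"
  have RM: "R \<subseteq> M" unfolding R_def using p3 by auto
  have AM: "A \<inter> M = {}" unfolding A_def using p2 by auto
  have injR: "inj_on (\<lambda>k. (ys (Suc k), zs k)) {..<h-1}" using iz by (auto simp: inj_on_def)
  have cR: "card R = h - 1" unfolding R_def using card_image[OF injR] by simp
  have injA: "inj_on (\<lambda>k. (ys k, zs k)) {..<h}" using iz by (auto simp: inj_on_def)
  have cA: "card A = h" unfolding A_def using card_image[OF injA] by simp
  have finA: "finite A" unfolding A_def by auto
  have cM': "card M' = card M + 1"
  proof -
    have "card (M - R) = card M - (h - 1)" using card_Diff_subset[OF _ RM] finM RM cR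
      by (metis finite_subset)
    moreover have "card R \<le> card M" using card_mono[OF finM RM] .
    moreover have "(M - R) \<inter> A = {}" using AM by auto
    ultimately show ?thesis unfolding M'_def using card_Un_disjoint[of "M - R" A] finM finA cA cR p1
      by simp
  qed
  have b1: "M' \<subseteq> Bs \<times> Js" unfolding M'_def A_def using Msub p2 by auto
  have b2: "\<forall>(x, y) \<in> M'. y \<in> S x" unfolding M'_def A_def using MS p2 by auto
  have b4: "x = x'" if "(x, y) \<in> M'" "(x', y) \<in> M'" for x x' y
  proof -
    have other: "x = x'" if o1: "(x, y) \<in> M - R" and o2: "(x', y) \<in> A" for x x'
    proof -
      obtain k where k: "k < h" "x' = ys k" "y = zs k" using o2 unfolding A_def by auto
      show ?thesis
      proof (cases "k + 1 < h")
        case True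
        then have "(ys (k+1), zs k) \<in> M" using p3 by auto
        then have "x = ys (k+1)" using Mu o1 k by auto
        moreover have "(ys (Suc k), zs k) \<in> R" unfolding R_def using True by auto
        ultimately show ?thesis using o1 k by auto
      next
        case False
        then have "k = h - 1" using k by auto
        then have "y = j" using k p1 by auto
        then show ?thesis using o1 j by force
      qed
    qed
    show ?thesis
    proof (cases "(x, y) \<in> A")
      case xA: True
      show ?thesis
      proof (cases "(x', y) \<in> A")
        case True
        obtain k k' where "k < h" "k' < h" "x = ys k" "y = zs k" "x' = ys k'" "y = zs k'"
          using xA True unfolding A_def by auto
        then show ?thesis using iz by (auto simp: inj_on_def)
      next
        case False
        then have "(x', y) \<in> M - R" using that(2) unfolding M'_def by blast
        then show ?thesis using other[of x' x] xA by simp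
      qed
    next
      case False
      then have "(x, y) \<in> M - R" using that unfolding M'_def by auto
      show ?thesis
      proof (cases "(x', y) \<in> A")
        case True then show ?thesis using other[of x x'] \<open>(x, y) \<in> M - R\<close> by simp
      next
        case False
        then have "(x', y) \<in> M" using that(2) unfolding M'_def by blast
        then show ?thesis using Mu[of x y x'] \<open>(x, y) \<in> M - R\<close> by blast
      qed
    qed
  qed
  have b3: "card {z. (y, z) \<in> M'} \<le> d y" for y
  proof -
    have "{z. (y, z) \<in> M} \<subseteq> Js" using Msub by blast
    then have finE: "finite {z. (y, z) \<in> M}" using fin(2) finite_subset by blast
    show ?thesis
    proof (cases "y \<in> ys ` {..<h}")
      case False
      then have "{z. (y, z) \<in> M'} \<subseteq> {z. (y, z) \<in> M}" unfolding M'_def A_def by auto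
      then show ?thesis using card_mono[OF finE] Mcap[of y] by (meson order.trans)
    next
      case True
      then obtain a where a: "a < h" "y = ys a" by auto
      have Ay: "{z. (y, z) \<in> A} = {zs a}" unfolding A_def using a iy by (auto simp: inj_on_def)
      show ?thesis
      proof (cases "a = 0")
        case True
        then have "{z. (y, z) \<in> M'} \<subseteq> insert (zs a) {z. (y, z) \<in> M}" using Ay unfolding M'_def by auto
        then have "card {z. (y, z) \<in> M'} \<le> card (insert (zs a) {z. (y, z) \<in> M})"
          using finE by (intro card_mono) auto
        also have "\<dots> \<le> card {z. (y, z) \<in> M} + 1" using finE by (simp add: card_insert_if)
        finally have "card {z. (y, z) \<in> M'} \<le> card {z. (y, z) \<in> M} + 1" .
        then show ?thesis using lt a True p1 by auto
      next
        case False
        then have inR: "(y, zs (a-1)) \<in> R" unfolding R_def using a by (auto intro!: image_eqI[of _ _ "a-1"])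
        then have inM: "zs (a-1) \<in> {z. (y, z) \<in> M}" using RM by auto
        have "{z. (y, z) \<in> M'} \<subseteq> insert (zs a) ({z. (y, z) \<in> M} - {zs (a-1)})" using Ay inR unfolding M'_def by auto
        then have "card {z. (y, z) \<in> M'} \<le> card (insert (zs a) ({z. (y, z) \<in> M} - {zs (a-1)}))"
          using finE by (intro card_mono) auto
        also have "\<dots> \<le> card ({z. (y, z) \<in> M} - {zs (a-1)}) + 1"
          using finE by (simp add: card_insert_if)
        also have "\<dots> = card {z. (y, z) \<in> M}"
        proof -
          have "card {z. (y, z) \<in> M} > 0" using inM finE card_gt_0_iff by blast
          then show ?thesis using inM finE by (simp add: card_Diff_singleton)
        qed
        finally show ?thesis using Mcap[of y] by auto
      qed
    qed
  qed
  have "bmatch S Bs Js d M'" unfolding bmatch_def using b1 b2 b3 b4 by blast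
  then have "card M' \<le> msize S Bs Js d" using bmatch_finite_card fin by blast
  then show False using cM' cM by auto
qed




definition Pset :: "'b set \<Rightarrow> ('b \<Rightarrow> real) \<Rightarrow> ('b \<Rightarrow> real) \<Rightarrow> nat \<Rightarrow> real set" where
  "Pset I v b N = v ` I \<union> (\<lambda>(i, m). b i / real m) ` (I \<times> {1..N})"

definition Eset :: "'b set \<Rightarrow> ('b \<Rightarrow> real) \<Rightarrow> ('b \<Rightarrow> real) \<Rightarrow> nat \<Rightarrow> real set" where
  "Eset I v b N = insert 1 {x \<in> (\<lambda>(i, p, k). (b i - real (Suc k) * p) / real (Suc k)) ` (I \<times> Pset I v b N \<times> {1..N}). 0 < x}"

lemma Pset_finite: "finite I \<Longrightarrow> finite (Pset I v b N)"
  unfolding Pset_def by auto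

lemma Eset_finite: "finite I \<Longrightarrow> finite (Eset I v b N)"
  unfolding Eset_def using Pset_finite[of I v b N] by auto

lemma Eset_pos: "finite I \<Longrightarrow> 0 < Min (Eset I v b N)"
  using Eset_finite[of I v b N] by (subst Min_gr_iff) (auto simp: Eset_def)

lemma Eset_bound:
  assumes "finite I" "i \<in> I" "p \<in> Pset I v b N" "1 \<le> k" "k \<le> N" "0 < b i - real (Suc k) * p"
  shows "Min (Eset I v b N) \<le> (b i - real (Suc k) * p) / real (Suc k)"
proof -
  have "(b i - real (Suc k) * p) / real (Suc k) \<in> Eset I v b N"
    unfolding Eset_def using assms by (auto intro!: image_eqI[of _ _ "(i, p, k)"])
  then show ?thesis using Eset_finite[OF assms(1)] by auto
qed

lemma dem_pos_le: "0 < demand S v bud x i \<Longrightarrow> 0 < x \<and> x \<le> v i"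
  by (simp add: demand_def split: if_splits)

lemma demand_small: assumes "0 < x" "bud i < x" shows "demand S v bud x i = 0"
proof -
  have "bud i / x < 1" using assms by (simp add: divide_less_eq)
  then have "\<lfloor>bud i / x\<rfloor> < 1" by (simp add: floor_less_iff)
  then have "nat \<lfloor>bud i / x\<rfloor> = 0" by simp
  then show ?thesis by (simp add: demand_def)
qed

lemma demand_above: "v i < x \<Longrightarrow> demand S v bud x i = 0"
  by (simp add: demand_def)

lemma Ibuy_eq: "Ibuy I S v b s x = {i \<in> I. 0 < dem S v b s x i}"
  unfolding Ibuy_def Abuy_def Qbuy_def dem_def
proof (rule set_eqI)
  fix i show "i \<in> {i \<in> I. x < v i \<and> 0 < demand S v (rbud b s) x i} \<union> {i \<in> I. v i = x \<and> 0 < demand S v (rbud b s) x i}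
     \<longleftrightarrow> i \<in> {i \<in> I. 0 < demand S v (rbud b s) x i}"
    using dem_pos_le[of S v "rbud b s" x i] by auto
qed

lemma floor_bound:
  assumes "0 < p" "0 \<le> y"
  shows "y < (real (nat \<lfloor>y / p\<rfloor>) + 1) * p"
proof -
  have "y / p < real_of_int \<lfloor>y / p\<rfloor> + 1" by linarith
  then have "y < (real_of_int \<lfloor>y / p\<rfloor> + 1) * p" using pos_divide_less_eq[OF assms(1)] by blast
  moreover have "real (nat \<lfloor>y / p\<rfloor>) = real_of_int \<lfloor>y / p\<rfloor>" using assms by simp
  ultimately show ?thesis by simp
qed

lemma floor_lower:
  assumes "0 < p" "m \<le> nat \<lfloor>y / p\<rfloor>" "1 \<le> m"
  shows "real m * p \<le> y"
proof -
  have "int m \<le> \<lfloor>y / p\<rfloor>" using assms(2,3) by (cases "\<lfloor>y/p\<rfloor> \<ge> 0") (auto simp: le_nat_iff)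
  then have "real m \<le> real_of_int \<lfloor>y / p\<rfloor>" by (metis of_int_of_nat_eq of_int_le_iff)
  also have "\<dots> \<le> y / p" by simp
  finally show ?thesis using assms(1) by (simp add: le_divide_eq)
qed

lemma bmatch_cong1:
  assumes "B1 \<subseteq> I" "\<forall>i\<in>I. S i \<inter> U \<noteq> {} \<longrightarrow> (i \<in> B1 \<longleftrightarrow> i \<in> B2) \<and> d1 i = d2 i"
    and "bmatch S B1 U d1 M"
  shows "bmatch S B2 U d2 M"
proof -
  have M: "M \<subseteq> B1 \<times> U" "\<forall>(i, j)\<in>M. j \<in> S i" "\<forall>i. card {j. (i, j) \<in> M} \<le> d1 i"
    "\<forall>i i' j. (i, j) \<in> M \<longrightarrow> (i', j) \<in> M \<longrightarrow> i = i'" using assms(3) unfolding bmatch_def by auto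
  have rel: "i \<in> I \<and> S i \<inter> U \<noteq> {}" if "(i, j) \<in> M" for i j using M(1,2) that assms(1) by blast
  have "M \<subseteq> B2 \<times> U" using M(1) rel assms(2) by fastforce
  moreover have "card {j. (i, j) \<in> M} \<le> d2 i" for i
  proof (cases "{j. (i, j) \<in> M} = {}")
    case True then show ?thesis by simp
  next
    case False then obtain j where "(i, j) \<in> M" by auto
    then have "d1 i = d2 i" using rel assms(2) by blast
    then show ?thesis using M(3) by metis
  qed
  ultimately show ?thesis using M unfolding bmatch_def by blast
qed

lemma bmatch_cong:
  assumes "B1 \<subseteq> I" "B2 \<subseteq> I" "\<forall>i\<in>I. S i \<inter> U \<noteq> {} \<longrightarrow> (i \<in> B1 \<longleftrightarrow> i \<in> B2) \<and> d1 i = d2 i"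
  shows "bmatch S B1 U d1 M = bmatch S B2 U d2 M"
  using bmatch_cong1[OF assms(1,3)] bmatch_cong1[OF assms(2), of S U B1 d2 d1] assms(3) by metis

definition inv :: "'b set \<Rightarrow> 'j set \<Rightarrow> ('b \<Rightarrow> 'j set) \<Rightarrow> ('b \<Rightarrow> real) \<Rightarrow> ('b \<Rightarrow> real) \<Rightarrow> ('b, 'j) auction_state \<Rightarrow> bool" where
  "inv I J0 S v b s \<longleftrightarrow> finite (unsold s) \<and> unsold s \<subseteq> J0 \<and>
     (\<forall>i. xbundle s i \<inter> unsold s = {} \<and> finite (xbundle s i)) \<and>
     (\<forall>i\<in>I. \<exists>r. (\<forall>j\<in>xbundle s i. iprice s j = r) \<and> paid s i = r * real (card (xbundle s i)) \<and>
        (xbundle s i \<noteq> {} \<longrightarrow> S i \<inter> unsold s = {} \<or> b i - paid s i < cur s \<or> (v i \<le> cur s \<and> r = v i))) \<and>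
     (cur s = 0 \<or> cur s \<in> Pset I v b (card J0)) \<and> 0 \<le> cur s"

lemma inv_init: "finite J0 \<Longrightarrow> inv I J0 S v b (init_state J0)"
  unfolding inv_def init_state_def by auto

lemma fresh_demand_eq:
  assumes P: "p \<notin> Pset I v b N" and iI: "i \<in> I" and vb: "0 < v i" "v i \<le> b i"
    and c: "card (S i) \<le> N" and pq: "0 < p" "p < q" and qP: "\<forall>x\<in>Pset I v b N. p < x \<longrightarrow> q \<le> x"
  shows "demand S v (\<lambda>_. b i) p i = demand S v (\<lambda>_. b i) q i"
proof -
  have vP: "v i \<in> Pset I v b N" unfolding Pset_def using iI by auto
  show ?thesis
  proof (cases "v i < p")
    case True then show ?thesis using pq by (simp add: demand_def)
  next
    case False
    then have "p < v i" using vP P by (cases "v i = p") auto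
    then have "q \<le> v i" using qP vP by auto
    then have dp: "demand S v (\<lambda>_. b i) p i = min (nat \<lfloor>b i / p\<rfloor>) (card (S i))"
      and dq: "demand S v (\<lambda>_. b i) q i = min (nat \<lfloor>b i / q\<rfloor>) (card (S i))"
      using pq \<open>p < v i\<close> by (auto simp: demand_def)
    have bpos: "0 < b i" using vb by auto
    have "b i / q \<le> b i / p" using pq bpos by (simp add: frac_le)
    then have fqp: "nat \<lfloor>b i / q\<rfloor> \<le> nat \<lfloor>b i / p\<rfloor>" by (simp add: floor_mono nat_mono)
    have "\<not> min (nat \<lfloor>b i / q\<rfloor>) (card (S i)) < min (nat \<lfloor>b i / p\<rfloor>) (card (S i))"
    proof
      assume lt: "min (nat \<lfloor>b i / q\<rfloor>) (card (S i)) < min (nat \<lfloor>b i / p\<rfloor>) (card (S i))"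
      define m where "m = min (nat \<lfloor>b i / p\<rfloor>) (card (S i))"
      have m1: "1 \<le> m" "m \<le> card (S i)" "m \<le> nat \<lfloor>b i / p\<rfloor>" "nat \<lfloor>b i / q\<rfloor> < m"
        using lt unfolding m_def by auto
      have "real m * p \<le> b i" using floor_lower[OF pq(1) m1(3) m1(1)] .
      moreover have "b i < (real (nat \<lfloor>b i / q\<rfloor>) + 1) * q" using floor_bound[of q "b i"] pq bpos by auto
      moreover have "(real (nat \<lfloor>b i / q\<rfloor>) + 1) * q \<le> real m * q"
        using m1(4) pq by (intro mult_right_mono) auto
      ultimately have "p \<le> b i / real m" "b i / real m < q" using m1(1)
        by (auto simp: le_divide_eq divide_less_eq mult.commute)
      moreover have "b i / real m \<in> Pset I v b N" unfolding Pset_def using iI m1 c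
        by (auto intro!: image_eqI[of _ _ "(i, m)"])
      ultimately show False using P qP by (cases "b i / real m = p") auto
    qed
    then show ?thesis unfolding dp dq using fqp by linarith
  qed
qed

lemma crit_in_P:
  assumes fin: "finite I" "finite J0" and SJ: "\<forall>i\<in>I. S i \<subseteq> J0"
    and vb: "\<forall>i\<in>I. 0 < v i" "\<forall>i\<in>I. v i \<le> b i"
    and iv: "inv I J0 S v b s" and cr: "critical I S v b s p"
  shows "p \<in> Pset I v b (card J0)"
proof (rule ccontr)
  assume P: "p \<notin> Pset I v b (card J0)"
  have cp: "cur s \<le> p" "0 < p" "\<And>q. p < q \<Longrightarrow> gsize I S v b s q < gsize I S v b s p"
    using cr unfolding critical_def by auto
  have ivc: "cur s = 0 \<or> cur s \<in> Pset I v b (card J0)" "0 \<le> cur s" using iv unfolding inv_def by auto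
  have pc: "cur s < p" using cp ivc P by (cases "cur s = p") auto
  define Q where "Q = {x \<in> Pset I v b (card J0). p < x}"
  define q where "q = (if Q = {} then p + 1 else Min Q)"
  have finQ: "finite Q" unfolding Q_def using Pset_finite[OF fin(1)] by auto
  have qp: "p < q" unfolding q_def using finQ by (auto simp: Q_def)
  have qP: "\<forall>x\<in>Pset I v b (card J0). p < x \<longrightarrow> q \<le> x"
    unfolding q_def using finQ by (auto simp: Q_def)
  have deq: "dem S v b s p i = dem S v b s q i" if iI: "i \<in> I" and SU: "S i \<inter> unsold s \<noteq> {}" for i
  proof -
    obtain r where r: "\<forall>j\<in>xbundle s i. iprice s j = r" "paid s i = r * real (card (xbundle s i))"
      "xbundle s i \<noteq> {} \<longrightarrow> S i \<inter> unsold s = {} \<or> b i - paid s i < cur s \<or> (v i \<le> cur s \<and> r = v i)"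
      using iv iI unfolding inv_def by blast
    show ?thesis
    proof (cases "xbundle s i = {}")
      case False
      then have "b i - paid s i < cur s \<or> v i \<le> cur s" using r SU by auto
      then show ?thesis
      proof
        assume "b i - paid s i < cur s"
        then have "rbud b s i < p" "rbud b s i < q" using pc qp by (auto simp: rbud_def)
        then have "demand S v (rbud b s) p i = 0" "demand S v (rbud b s) q i = 0"
          using demand_small[of p "rbud b s" i S v] demand_small[of q "rbud b s" i S v] cp(2) qp by auto
        then show ?thesis unfolding dem_def by simp
      next
        assume "v i \<le> cur s"
        then have "v i < p" "v i < q" using pc qp by auto
        then have "demand S v (rbud b s) p i = 0" "demand S v (rbud b s) q i = 0"
          using demand_above by metis+
        then show ?thesis unfolding dem_def by simp
      qed
    next
      case True
      then have "paid s i = 0" using r by simp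
      then have rb: "rbud b s = (\<lambda>j. if j = i then b i else rbud b s j)" by (auto simp: rbud_def)
      have ee: "demand S v (rbud b s) x i = demand S v (\<lambda>_. b i) x i" for x
        using \<open>paid s i = 0\<close> by (simp add: demand_def rbud_def)
      have "card (S i) \<le> card J0" using SJ iI fin by (simp add: card_mono)
      then show ?thesis unfolding dem_def ee using fresh_demand_eq[OF P iI _ _ _ cp(2) qp qP] vb iI by auto
    qed
  qed
  have "Ibuy I S v b s p \<subseteq> I" "Ibuy I S v b s q \<subseteq> I" by (auto simp: Ibuy_eq)
  moreover have "\<forall>i\<in>I. S i \<inter> unsold s \<noteq> {} \<longrightarrow> (i \<in> Ibuy I S v b s p \<longleftrightarrow> i \<in> Ibuy I S v b s q) \<and>
      dem S v b s p i = dem S v b s q i" using deq by (auto simp: Ibuy_eq)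
  ultimately have "{M. bmatch S (Ibuy I S v b s p) (unsold s) (dem S v b s p) M} =
      {M. bmatch S (Ibuy I S v b s q) (unsold s) (dem S v b s q) M}"
    using bmatch_cong by blast
  then have "gsize I S v b s p = gsize I S v b s q" unfolding gsize_def msize_def by simp
  then show False using cp(3)[OF qp] by simp
qed

lemma give_inv:
  assumes iv: "inv I J0 S v b s" and cc: "cur s \<le> c'" "c' \<in> Pset I v b (card J0)"
    and Nsub: "\<forall>(i, j)\<in>N. i \<in> I \<and> j \<in> unsold s"
    and H: "\<forall>i\<in>I. {j. (i, j) \<in> N} \<noteq> {} \<longrightarrow>
       (xbundle s i = {} \<and> (S i \<inter> unsold s \<subseteq> {j. (i, j) \<in> N} \<or> b i - q * real (card {j. (i, j) \<in> N}) < c' \<or> (v i \<le> c' \<and> q = v i)))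
       \<or> (v i \<le> c' \<and> q = v i \<and> (\<forall>j\<in>xbundle s i. iprice s j = v i))"
    and U'': "U'' \<subseteq> unsold s - snd ` N"
  shows "inv I J0 S v b ((give (s\<lparr>cur := c'\<rparr>) N q)\<lparr>unsold := U''\<rparr>)"
proof -
  define G where "G i = {j. (i, j) \<in> N}" for i
  have iv1: "finite (unsold s)" "unsold s \<subseteq> J0" "\<And>i. xbundle s i \<inter> unsold s = {}" "\<And>i. finite (xbundle s i)"
    "0 \<le> cur s" using iv unfolding inv_def by auto
  have GU: "G i \<subseteq> unsold s" for i using Nsub unfolding G_def by auto
  have GN: "G i \<subseteq> snd ` N" for i unfolding G_def by force
  have finG: "finite (G i)" for i using GU iv1(1) finite_subset by blast
  have c0: "0 \<le> c'" using cc iv1(5) by auto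
  have st: "unsold ((give (s\<lparr>cur := c'\<rparr>) N q)\<lparr>unsold := U''\<rparr>) = U''"
    "xbundle ((give (s\<lparr>cur := c'\<rparr>) N q)\<lparr>unsold := U''\<rparr>) = (\<lambda>i. xbundle s i \<union> G i)"
    "paid ((give (s\<lparr>cur := c'\<rparr>) N q)\<lparr>unsold := U''\<rparr>) = (\<lambda>i. paid s i + q * real (card (G i)))"
    "iprice ((give (s\<lparr>cur := c'\<rparr>) N q)\<lparr>unsold := U''\<rparr>) = (\<lambda>j. if j \<in> snd ` N then q else iprice s j)"
    "cur ((give (s\<lparr>cur := c'\<rparr>) N q)\<lparr>unsold := U''\<rparr>) = c'"
    unfolding give_def G_def by auto
  have buyer: "\<exists>r. (\<forall>j\<in>xbundle s i \<union> G i. (if j \<in> snd ` N then q else iprice s j) = r) \<and>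
      paid s i + q * real (card (G i)) = r * real (card (xbundle s i \<union> G i)) \<and>
      (xbundle s i \<union> G i \<noteq> {} \<longrightarrow> S i \<inter> U'' = {} \<or> b i - (paid s i + q * real (card (G i))) < c' \<or> (v i \<le> c' \<and> r = v i))"
    if iI: "i \<in> I" for i
  proof -
    obtain r where r: "\<forall>j\<in>xbundle s i. iprice s j = r" "paid s i = r * real (card (xbundle s i))"
      "xbundle s i \<noteq> {} \<longrightarrow> S i \<inter> unsold s = {} \<or> b i - paid s i < cur s \<or> (v i \<le> cur s \<and> r = v i)"
      using iv iI unfolding inv_def by blast
    have XN: "j \<notin> snd ` N" if "j \<in> xbundle s i" for j using that iv1(3)[of i] GU Nsub by force
    show ?thesis
    proof (cases "G i = {}")
      case True
      show ?thesis
      proof (intro exI[of _ r] conjI impI)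
        show "\<forall>j\<in>xbundle s i \<union> G i. (if j \<in> snd ` N then q else iprice s j) = r" using True r(1) XN by auto
        show "paid s i + q * real (card (G i)) = r * real (card (xbundle s i \<union> G i))" using True r(2) by simp
        assume "xbundle s i \<union> G i \<noteq> {}"
        then show "S i \<inter> U'' = {} \<or> b i - (paid s i + q * real (card (G i))) < c' \<or> v i \<le> c' \<and> r = v i"
          using r(3) True U'' cc(1) by auto
      qed
    next
      case False
      then have Hi: "(xbundle s i = {} \<and> (S i \<inter> unsold s \<subseteq> G i \<or> b i - q * real (card (G i)) < c' \<or> (v i \<le> c' \<and> q = v i)))
       \<or> (v i \<le> c' \<and> q = v i \<and> (\<forall>j\<in>xbundle s i. iprice s j = v i))" using H iI unfolding G_def by blast
      have Gq: "\<forall>j\<in>G i. (if j \<in> snd ` N then q else iprice s j) = q" using GN by auto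
      show ?thesis
      proof (cases "xbundle s i = {}")
        case True
        then have p0: "paid s i = 0" using r(2) by simp
        show ?thesis
        proof (intro exI[of _ q] conjI impI)
          show "\<forall>j\<in>xbundle s i \<union> G i. (if j \<in> snd ` N then q else iprice s j) = q" using True Gq by auto
          show "paid s i + q * real (card (G i)) = q * real (card (xbundle s i \<union> G i))" using True p0 by simp
          assume "xbundle s i \<union> G i \<noteq> {}"
          have "S i \<inter> unsold s \<subseteq> G i \<Longrightarrow> S i \<inter> U'' = {}" using U'' GN by blast
          then show "S i \<inter> U'' = {} \<or> b i - (paid s i + q * real (card (G i))) < c' \<or> v i \<le> c' \<and> q = v i"
            using Hi True p0 by auto
        qed
      next
        case Xne: False
        then have Hi2: "v i \<le> c'" "q = v i" "\<forall>j\<in>xbundle s i. iprice s j = v i" using Hi by auto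
        obtain j0 where "j0 \<in> xbundle s i" using Xne by auto
        then have rv: "r = v i" using r(1) Hi2(3) by auto
        have disj: "xbundle s i \<inter> G i = {}" using iv1(3)[of i] GU by blast
        show ?thesis
        proof (intro exI[of _ q] conjI impI)
          show "\<forall>j\<in>xbundle s i \<union> G i. (if j \<in> snd ` N then q else iprice s j) = q" using Gq XN Hi2 by auto
          have "card (xbundle s i \<union> G i) = card (xbundle s i) + card (G i)"
            using card_Un_disjoint[OF iv1(4) finG disj] .
          then show "paid s i + q * real (card (G i)) = q * real (card (xbundle s i \<union> G i))"
            using r(2) rv Hi2(2) by (simp add: algebra_simps)
          show "S i \<inter> U'' = {} \<or> b i - (paid s i + q * real (card (G i))) < c' \<or> v i \<le> c' \<and> q = v i"
            using Hi2 by auto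
        qed
      qed
    qed
  qed
  show ?thesis unfolding inv_def st
  proof (intro conjI allI ballI)
    show "finite U''" using U'' iv1(1) finite_subset by blast
    show "U'' \<subseteq> J0" using U'' iv1(2) by blast
    fix i
    show "(xbundle s i \<union> G i) \<inter> U'' = {}" using iv1(3)[of i] GN[of i] U'' by blast
    show "finite (xbundle s i \<union> G i)" using iv1(4) finG by auto
  next
    fix i assume "i \<in> I"
    then show "\<exists>r. (\<forall>j\<in>xbundle s i \<union> G i. (if j \<in> snd ` N then q else iprice s j) = r) \<and>
      paid s i + q * real (card (G i)) = r * real (card (xbundle s i \<union> G i)) \<and>
      (xbundle s i \<union> G i \<noteq> {} \<longrightarrow> S i \<inter> U'' = {} \<or> b i - (paid s i + q * real (card (G i))) < c' \<or> (v i \<le> c' \<and> r = v i))"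
      using buyer by blast
  next
    show "c' = 0 \<or> c' \<in> Pset I v b (card J0)" using cc by auto
    show "0 \<le> c'" using c0 .
  qed
qed

lemma sat_split:
  assumes "card G = min k (card A)" "G \<subseteq> A" "finite A"
  shows "A \<subseteq> G \<or> card G = k"
proof (cases "k \<le> card A")
  case True then show ?thesis using assms by auto
next
  case False
  then have "card G = card A" using assms by auto
  then have "G = A" using card_subset_eq[OF assms(3) assms(2)] by simp
  then show ?thesis by simp
qed

lemma fresh_dem:
  assumes "paid s i = 0" "0 < x" "x \<le> v i"
  shows "dem S v b s x i = min (nat \<lfloor>b i / x\<rfloor>) (card (S i))"
  using assms by (simp add: dem_def demand_def rbud_def)

lemma step_inv:
  assumes fin: "finite I" "finite J0" and SJ: "\<forall>i\<in>I. S i \<subseteq> J0"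
    and vb: "\<forall>i\<in>I. 0 < v i" "\<forall>i\<in>I. v i \<le> b i"
    and eps: "0 < eps" "eps < Min (Eset I v b (card J0))"
    and iv: "inv I J0 S v b s" and st: "alg_step I S v b eps s s'"
  shows "inv I J0 S v b s'"
  using st
proof (cases rule: alg_step.cases)
  case (procI p JQ M Jbar M1 M2)
  have cr: "critical I S v b s p" using procI(1) unfolding is_critical_least_def by auto
  then have pc: "cur s \<le> p" "0 < p" unfolding critical_def by auto
  have pP: "p \<in> Pset I v b (card J0)" using crit_in_P[OF fin SJ vb iv cr] .
  have finU: "finite (unsold s)" using iv unfolding inv_def by auto
  have bmM: "bmatch S (Abuy I S v b s p) (unsold s) (dem S v b s p) M" using procI(4) unfolding max_bmatch_def by auto
  have bmM2: "bmatch S (Qbuy I S v b s p) Jbar (dem S v b s p) M2" using procI(8) unfolding max_bmatch_def by auto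
  have M1def: "M1 = {(i, j). (i, j) \<in> M \<and> (\<exists>j'\<in>Jbar. aug_path S (Abuy I S v b s p) (unsold s) M i j')}"
    using procI(7) by simp
  have M1M: "M1 \<subseteq> M" unfolding M1def by auto
  have MA0: "M \<subseteq> Abuy I S v b s p \<times> unsold s" "\<forall>(i, j)\<in>M. j \<in> S i" using bmM unfolding bmatch_def by auto
  have MA: "i \<in> I \<and> p < v i \<and> 0 < dem S v b s p i \<and> j \<in> unsold s \<and> j \<in> S i" if "(i, j) \<in> M" for i j
    using MA0 that unfolding Abuy_def by auto
  have M2Q0: "M2 \<subseteq> Qbuy I S v b s p \<times> Jbar" "\<forall>(i, j)\<in>M2. j \<in> S i" using bmM2 unfolding bmatch_def by auto
  have M2Q: "i \<in> I \<and> v i = p \<and> 0 < dem S v b s p i \<and> j \<in> unsold s \<and> j \<in> S i" if "(i, j) \<in> M2" for i j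
    using M2Q0 that procI(6) unfolding Qbuy_def by auto
  have fAbuy: "finite (Abuy I S v b s p)" using fin(1) unfolding Abuy_def by auto
  have Nsub: "\<forall>(i, j)\<in>M1 \<union> M2. i \<in> I \<and> j \<in> unsold s" using MA M2Q M1M by blast
  have H: "\<forall>i\<in>I. {j. (i, j) \<in> M1 \<union> M2} \<noteq> {} \<longrightarrow>
       (xbundle s i = {} \<and> (S i \<inter> unsold s \<subseteq> {j. (i, j) \<in> M1 \<union> M2} \<or> b i - p * real (card {j. (i, j) \<in> M1 \<union> M2}) < p \<or> (v i \<le> p \<and> p = v i)))
       \<or> (v i \<le> p \<and> p = v i \<and> (\<forall>j\<in>xbundle s i. iprice s j = v i))"
  proof (intro ballI impI)
    fix i assume iI: "i \<in> I" and ne: "{j. (i, j) \<in> M1 \<union> M2} \<noteq> {}"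
    then obtain j where ij: "(i, j) \<in> M1 \<union> M2" by auto
    have dp: "0 < dem S v b s p i" "j \<in> S i \<inter> unsold s" using ij MA M2Q M1M by blast+
    obtain r where r: "\<forall>j\<in>xbundle s i. iprice s j = r" "paid s i = r * real (card (xbundle s i))"
      "xbundle s i \<noteq> {} \<longrightarrow> S i \<inter> unsold s = {} \<or> b i - paid s i < cur s \<or> (v i \<le> cur s \<and> r = v i)"
      using iv iI unfolding inv_def by blast
    show "(xbundle s i = {} \<and> (S i \<inter> unsold s \<subseteq> {j. (i, j) \<in> M1 \<union> M2} \<or> b i - p * real (card {j. (i, j) \<in> M1 \<union> M2}) < p \<or> (v i \<le> p \<and> p = v i)))
       \<or> (v i \<le> p \<and> p = v i \<and> (\<forall>j\<in>xbundle s i. iprice s j = v i))"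
    proof (cases "xbundle s i = {}")
      case False
      have "\<not> b i - paid s i < cur s"
      proof
        assume "b i - paid s i < cur s"
        then have "rbud b s i < p" using pc by (auto simp: rbud_def)
        then have "dem S v b s p i = 0" unfolding dem_def using demand_small[of p "rbud b s" i S v] pc by auto
        then show False using dp by simp
      qed
      then have c3: "v i \<le> cur s" "r = v i" using r(3) False dp(2) by auto
      have "(i, j) \<notin> M1" using MA[of i j] M1M c3 pc by auto
      then have "(i, j) \<in> M2" using ij by blast
      then have "v i = p" using M2Q by blast
      then show ?thesis using c3 r(1) by auto
    next
      case True
      show ?thesis
      proof (cases "v i = p")
        case True then show ?thesis using \<open>xbundle s i = {}\<close> by auto
      next
        case vp: False
        have p0: "paid s i = 0" using r(2) True by simp
        have nM2: "(i, j') \<notin> M2" for j' using M2Q vp by blast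
        then have ij1: "(i, j) \<in> M1" using ij by blast
        then obtain j' where j': "j' \<in> Jbar" "aug_path S (Abuy I S v b s p) (unsold s) M i j'" unfolding M1def by blast
        have G: "{j. (i, j) \<in> M1 \<union> M2} = {j. (i, j) \<in> M}"
          using nM2 j' M1M unfolding M1def by blast
        have j'U: "j' \<in> unsold s" "j' \<notin> snd ` M" using j'(1) procI(6) by auto
        have "card {j. (i, j) \<in> M} = dem S v b s p i"
          using aug_sat[OF procI(4) fAbuy finU j'(2) j'U] .
        moreover have "p < v i" using MA[of i j] ij1 M1M by blast
        ultimately have cG: "card {j. (i, j) \<in> M} = min (nat \<lfloor>b i / p\<rfloor>) (card (S i))"
          using fresh_dem[OF p0 pc(2)] by simp
        have GS: "{j. (i, j) \<in> M} \<subseteq> S i" using MA by blast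
        have finS: "finite (S i)" using SJ iI fin(2) finite_subset by blast
        from sat_split[OF cG GS finS]
        have "S i \<subseteq> {j. (i, j) \<in> M} \<or> card {j. (i, j) \<in> M} = nat \<lfloor>b i / p\<rfloor>" .
        then show ?thesis
        proof
          assume "S i \<subseteq> {j. (i, j) \<in> M}" then show ?thesis using True G by auto
        next
          assume k: "card {j. (i, j) \<in> M} = nat \<lfloor>b i / p\<rfloor>"
          have "0 \<le> b i" using vb iI by force
          then have "b i < (real (nat \<lfloor>b i / p\<rfloor>) + 1) * p" using floor_bound[OF pc(2), of "b i"] by blast
          then have "b i - p * real (card {j. (i, j) \<in> M1 \<union> M2}) < p" using G k by (simp add: algebra_simps)
          then show ?thesis using True by auto
        qed
      qed
    qed
  qed
  have "inv I J0 S v b ((give (s\<lparr>cur := p\<rparr>) (M1 \<union> M2) p)\<lparr>unsold := unsold s - snd ` (M1 \<union> M2)\<rparr>)"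
    using give_inv[OF iv pc(1) pP Nsub H] by blast
  moreover have "(give (s\<lparr>cur := p\<rparr>) (M1 \<union> M2) p)\<lparr>unsold := unsold s - snd ` (M1 \<union> M2)\<rparr> = s'"
    using procI(9) by (simp add: give_def)
  ultimately show ?thesis by simp
next
  case (procII p q M Jbar M1 s1)
  have cr: "critical I S v b s p" using procII(1) unfolding is_critical_least_def by auto
  then have pc: "cur s \<le> p" "0 < p" unfolding critical_def by auto
  have pP: "p \<in> Pset I v b (card J0)" using crit_in_P[OF fin SJ vb iv cr] .
  have qd: "q = p + eps" using procII(3) .
  have finU: "finite (unsold s)" using iv unfolding inv_def by auto
  have bmM: "bmatch S (Ibuy I S v b s q) (unsold s) (dem S v b s q) M" using procII(4) unfolding max_bmatch_def by auto
  have M1def: "M1 = {(i, j). (i, j) \<in> M \<and> (\<exists>j'\<in>Jbar. aug_path S (Ibuy I S v b s q) (unsold s) M i j')}"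
    using procII(6) by simp
  have M1M: "M1 \<subseteq> M" unfolding M1def by auto
  have MA0: "M \<subseteq> Ibuy I S v b s q \<times> unsold s" "\<forall>(i, j)\<in>M. j \<in> S i" using bmM unfolding bmatch_def by auto
  have MA: "i \<in> I \<and> 0 < dem S v b s q i \<and> j \<in> unsold s \<and> j \<in> S i" if "(i, j) \<in> M" for i j
    using MA0 that unfolding Ibuy_eq by auto
  have fIbuy: "finite (Ibuy I S v b s q)" using fin(1) unfolding Ibuy_eq by auto
  have Nsub: "\<forall>(i, j)\<in>M1. i \<in> I \<and> j \<in> unsold s" using MA M1M by blast
  have H: "\<forall>i\<in>I. {j. (i, j) \<in> M1} \<noteq> {} \<longrightarrow>
       (xbundle s i = {} \<and> (S i \<inter> unsold s \<subseteq> {j. (i, j) \<in> M1} \<or> b i - q * real (card {j. (i, j) \<in> M1}) < p \<or> (v i \<le> p \<and> q = v i)))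
       \<or> (v i \<le> p \<and> q = v i \<and> (\<forall>j\<in>xbundle s i. iprice s j = v i))"
  proof (intro ballI impI)
    fix i assume iI: "i \<in> I" and ne: "{j. (i, j) \<in> M1} \<noteq> {}"
    then obtain j where ij1: "(i, j) \<in> M1" by auto
    have dp: "0 < dem S v b s q i" "j \<in> S i \<inter> unsold s" using ij1 MA M1M by blast+
    have qv: "0 < q" "q \<le> v i" using dem_pos_le[of S v "rbud b s" q i] dp(1) unfolding dem_def by auto
    obtain r where r: "\<forall>j\<in>xbundle s i. iprice s j = r" "paid s i = r * real (card (xbundle s i))"
      "xbundle s i \<noteq> {} \<longrightarrow> S i \<inter> unsold s = {} \<or> b i - paid s i < cur s \<or> (v i \<le> cur s \<and> r = v i)"
      using iv iI unfolding inv_def by blast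
    have X0: "xbundle s i = {}"
    proof (rule ccontr)
      assume Xne: "xbundle s i \<noteq> {}"
      have "\<not> b i - paid s i < cur s"
      proof
        assume "b i - paid s i < cur s"
        then have "rbud b s i < q" using pc qd eps by (auto simp: rbud_def)
        then have "dem S v b s q i = 0" unfolding dem_def using demand_small[of q "rbud b s" i S v] qv by auto
        then show False using dp by simp
      qed
      then have "v i \<le> cur s" using r(3) Xne dp(2) by auto
      then show False using pc qd eps qv by auto
    qed
    have p0: "paid s i = 0" using r(2) X0 by simp
    obtain j' where j': "j' \<in> Jbar" "aug_path S (Ibuy I S v b s q) (unsold s) M i j'" using ij1 unfolding M1def by blast
    have G: "{j. (i, j) \<in> M1} = {j. (i, j) \<in> M}" using j' M1M unfolding M1def by blast
    have j'U: "j' \<in> unsold s" "j' \<notin> snd ` M" using j'(1) procII(5) by auto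
    have "card {j. (i, j) \<in> M} = dem S v b s q i"
      using aug_sat[OF procII(4) fIbuy finU j'(2) j'U] .
    then have cG: "card {j. (i, j) \<in> M} = min (nat \<lfloor>b i / q\<rfloor>) (card (S i))"
      using fresh_dem[of s i q v S b, OF p0 qv] by simp
    have GS: "{j. (i, j) \<in> M} \<subseteq> S i" using MA by blast
    have finS: "finite (S i)" using SJ iI fin(2) finite_subset by blast
    from sat_split[OF cG GS finS]
    have "S i \<subseteq> {j. (i, j) \<in> M} \<or> card {j. (i, j) \<in> M} = nat \<lfloor>b i / q\<rfloor>" .
    then show "(xbundle s i = {} \<and> (S i \<inter> unsold s \<subseteq> {j. (i, j) \<in> M1} \<or> b i - q * real (card {j. (i, j) \<in> M1}) < p \<or> (v i \<le> p \<and> q = v i)))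
       \<or> (v i \<le> p \<and> q = v i \<and> (\<forall>j\<in>xbundle s i. iprice s j = v i))"
    proof
      assume "S i \<subseteq> {j. (i, j) \<in> M}" then show ?thesis using X0 G by auto
    next
      assume k: "card {j. (i, j) \<in> M} = nat \<lfloor>b i / q\<rfloor>"
      define k where "k = card {j. (i, j) \<in> M}"
      have b0: "0 \<le> b i" using vb iI by force
      have bk: "b i < (real k + 1) * q" unfolding k_def k using floor_bound[OF qv(1) b0] by blast
      have k1: "1 \<le> k" unfolding k_def using G ne finU MA0
        by (metis One_nat_def Suc_leI card_gt_0_iff finite_subset GS finS)
      have kN: "k \<le> card J0" unfolding k_def using cG SJ iI fin(2) card_mono[of J0 "S i"] by auto
      have "b i - q * real k < p"
      proof (rule ccontr)
        assume "\<not> b i - q * real k < p"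
        then have ge: "p \<le> b i - q * real k" by simp
        have xpos: "0 < b i - real (Suc k) * p"
        proof -
          have "real k * eps > 0" using k1 eps(1) by simp
          then show ?thesis using ge qd by (simp add: algebra_simps)
        qed
        have "Min (Eset I v b (card J0)) \<le> (b i - real (Suc k) * p) / real (Suc k)"
          using Eset_bound[OF fin(1) iI pP k1 kN xpos] .
        then have "eps < (b i - real (Suc k) * p) / real (Suc k)" using eps(2) by simp
        then have "real (Suc k) * eps < b i - real (Suc k) * p" by (simp add: less_divide_eq mult.commute)
        then show False using bk qd by (simp add: algebra_simps)
      qed
      then show ?thesis using X0 G unfolding k_def by auto
    qed
  qed
  have U'': "{j \<in> unsold s1 - Jbar. \<exists>i\<in>I. j \<in> S i \<and> 0 < dem S v b s1 q i} \<subseteq> unsold s - snd ` M1"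
    using procII(7) by (auto simp: give_def)
  have "inv I J0 S v b ((give (s\<lparr>cur := p\<rparr>) M1 q)\<lparr>unsold := {j \<in> unsold s1 - Jbar. \<exists>i\<in>I. j \<in> S i \<and> 0 < dem S v b s1 q i}\<rparr>)"
    using give_inv[OF iv pc(1) pP Nsub H U''] .
  then show ?thesis using procII(7,8) by simp
qed

theorem lemma5:
  fixes I :: "'b set" and J0 :: "'j set" and S :: "'b \<Rightarrow> 'j set"
    and v b :: "'b \<Rightarrow> real"
  assumes "finite I" and "finite J0"
    and "\<forall>i\<in>I. S i \<subseteq> J0"
    and "\<forall>i\<in>I. 0 < v i"
    and "\<forall>i\<in>I. v i \<le> b i"
  shows "\<exists>\<epsilon>0>0. \<forall>eps. 0 < eps \<and> eps < \<epsilon>0 \<longrightarrow>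
           (\<forall>s. alg_outcome I J0 S v b eps s \<longrightarrow>
              (\<forall>i\<in>I. xbundle s i \<noteq> {} \<longrightarrow>
                 (\<forall>j\<in>xbundle s i. iprice s j = paid s i / real (card (xbundle s i)))))"
proof (intro exI[of _ "Min (Eset I v b (card J0))"] conjI allI impI ballI)
  show "0 < Min (Eset I v b (card J0))" using Eset_pos[OF assms(1)] .
next
  fix eps s i j
  assume e: "0 < eps \<and> eps < Min (Eset I v b (card J0))" and ao: "alg_outcome I J0 S v b eps s"
    and iI: "i \<in> I" and ne: "xbundle s i \<noteq> {}" and j: "j \<in> xbundle s i"
  have "(alg_step I S v b eps)\<^sup>*\<^sup>* (init_state J0) s" using ao unfolding alg_outcome_def by simp
  then have iv: "inv I J0 S v b s"
  proof (induction rule: rtranclp_induct)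
    case base then show ?case using inv_init[OF assms(2)] .
  next
    case (step y z) then show ?case using step_inv[OF assms] e by blast
  qed
  obtain r where r: "\<forall>j\<in>xbundle s i. iprice s j = r" "paid s i = r * real (card (xbundle s i))"
    using iv iI unfolding inv_def by blast
  have "card (xbundle s i) > 0" using ne iv unfolding inv_def by (auto simp: card_gt_0_iff)
  then show "iprice s j = paid s i / real (card (xbundle s i))" using r j by simp
qed

end
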